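(* Let $X$ be a partial design graph with parameters $(m,d,c_1,c_2)$, and let $Y$ be its $c_1$-graph. Then: (i) $Y$ is regular of degree $$d'=\frac{d(d-1)-(m-1)c_2}{c_1-c_2};$$ (ii) if $\alpha_1'=d',\alpha_2',\dots,\alpha_m'$ are the adjacency eigenvalues of $Y$ (with multiplicity), then the adjacency eigenvalues of $X$, with multiplicity, are $$\pm d,\qquad \pm\sqrt{(d-c_2)+(c_1-c_2)\alpha_k'}\quad (k=2,\dots,m).$$
   Context: A partial design graph is a finite, simple, connected, regular bipartite graph with $m$ vertices of each colour and degree $d$ such that the number of common neighbours of two distinct vertices of the same colour takes exactly two values $c_1\neq c_2$. Its $c_1$-graph is the (possibly disconnected) graph whose vertices are the $m$ vertices of one fixed colour (the black vertices), two of them being adjacent if and only if they have exactly $c_1$ common neighbours in $X$. Adjacency eigenvalues are eigenvalues of the adjacency matrix. *)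

theory Defs
  imports "Jordan_Normal_Form.Char_Poly"
begin

text \<open>Black vertices are 0..<m, white vertices are 0..<m as well; the incidence
 relation N b w says that black b is adjacent to white w.
 As a single graph, X has vertex set {0..<2m}: vertex i<m is black i,
 vertex m+j is white j.\<close>

definition X_adj :: "nat \<Rightarrow> (nat \<Rightarrow> nat \<Rightarrow> bool) \<Rightarrow> nat \<Rightarrow> nat \<Rightarrow> bool" where
  "X_adj m N i j \<longleftrightarrow> i < 2*m \<and> j < 2*m \<and>
     ((i < m \<and> m \<le> j \<and> N i (j - m)) \<or> (j < m \<and> m \<le> i \<and> N j (i - m)))"

definition X_connected :: "nat \<Rightarrow> (nat \<Rightarrow> nat \<Rightarrow> bool) \<Rightarrow> bool" where
  "X_connected m N \<longleftrightarrow> (\<forall>i<2*m. \<forall>j<2*m. (X_adj m N)\<^sup>*\<^sup>* i j)"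

definition black_deg :: "nat \<Rightarrow> (nat \<Rightarrow> nat \<Rightarrow> bool) \<Rightarrow> nat \<Rightarrow> nat" where
  "black_deg m N b = card {w. w < m \<and> N b w}"

definition white_deg :: "nat \<Rightarrow> (nat \<Rightarrow> nat \<Rightarrow> bool) \<Rightarrow> nat \<Rightarrow> nat" where
  "white_deg m N w = card {b. b < m \<and> N b w}"

definition common_black :: "nat \<Rightarrow> (nat \<Rightarrow> nat \<Rightarrow> bool) \<Rightarrow> nat \<Rightarrow> nat \<Rightarrow> nat" where
  "common_black m N u v = card {w. w < m \<and> N u w \<and> N v w}"

definition common_white :: "nat \<Rightarrow> (nat \<Rightarrow> nat \<Rightarrow> bool) \<Rightarrow> nat \<Rightarrow> nat \<Rightarrow> nat" where
  "common_white m N u v = card {b. b < m \<and> N b u \<and> N b v}"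

definition partial_design_graph ::
  "nat \<Rightarrow> nat \<Rightarrow> nat \<Rightarrow> nat \<Rightarrow> (nat \<Rightarrow> nat \<Rightarrow> bool) \<Rightarrow> bool" where
  "partial_design_graph m d c1 c2 N \<longleftrightarrow>
     X_connected m N \<and>
     (\<forall>b<m. black_deg m N b = d) \<and> (\<forall>w<m. white_deg m N w = d) \<and>
     c1 \<noteq> c2 \<and>
     {common_black m N u v | u v. u < m \<and> v < m \<and> u \<noteq> v}
       \<union> {common_white m N u v | u v. u < m \<and> v < m \<and> u \<noteq> v} = {c1, c2}"

definition X_mat :: "nat \<Rightarrow> (nat \<Rightarrow> nat \<Rightarrow> bool) \<Rightarrow> real mat" where
  "X_mat m N = mat (2*m) (2*m) (\<lambda>(i,j). if X_adj m N i j then 1 else 0)"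

definition Y_adj :: "nat \<Rightarrow> nat \<Rightarrow> (nat \<Rightarrow> nat \<Rightarrow> bool) \<Rightarrow> nat \<Rightarrow> nat \<Rightarrow> bool" where
  "Y_adj m c1 N u v \<longleftrightarrow> u < m \<and> v < m \<and> u \<noteq> v \<and> common_black m N u v = c1"

definition Y_mat :: "nat \<Rightarrow> nat \<Rightarrow> (nat \<Rightarrow> nat \<Rightarrow> bool) \<Rightarrow> real mat" where
  "Y_mat m c1 N = mat m m (\<lambda>(u,v). if Y_adj m c1 N u v then 1 else 0)"

definition Y_deg :: "nat \<Rightarrow> nat \<Rightarrow> (nat \<Rightarrow> nat \<Rightarrow> bool) \<Rightarrow> nat \<Rightarrow> nat" where
  "Y_deg m c1 N u = card {v. Y_adj m c1 N u v}"

end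

theory Submission
  imports Defs
begin


lemma char_poly_eval:
  assumes A: "(A :: real mat) \<in> carrier_mat n n"
  shows "poly (char_poly A) k = det (k \<cdot>\<^sub>m 1\<^sub>m n - A)"
proof -
  have "- char_matrix A k = k \<cdot>\<^sub>m 1\<^sub>m n - A"
    unfolding char_matrix_def using A by (intro eq_matI) auto
  then show ?thesis using char_poly_matrix[OF A] by simp
qed

lemma sylvester:
  fixes U V :: "real mat"
  assumes U: "U \<in> carrier_mat n n" and V: "V \<in> carrier_mat n n"
  shows "det (1\<^sub>m n + U * V) = det (1\<^sub>m n + V * U)"
proof -
  let ?F = "four_block_mat (1\<^sub>m n) U (-V) (1\<^sub>m n)"
  let ?R = "four_block_mat (1\<^sub>m n) (-U) (0\<^sub>m n n) (1\<^sub>m n)"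
  have F: "?F \<in> carrier_mat (n+n) (n+n)" using U V by auto
  have R: "?R \<in> carrier_mat (n+n) (n+n)" using U V by auto
  have "det ?F = det (1\<^sub>m n * 1\<^sub>m n - U * (-V))"
    by (rule det_four_block_mat, insert U V, auto)
  also have "1\<^sub>m n * 1\<^sub>m n - U * (-V) = 1\<^sub>m n + U * V"
    using U V by (auto intro!: eq_matI simp: mult_smult_distrib)
  finally have 1: "det ?F = det (1\<^sub>m n + U * V)" .
  have "?F * ?R = four_block_mat (1\<^sub>m n * 1\<^sub>m n + U * 0\<^sub>m n n) (1\<^sub>m n * (-U) + U * 1\<^sub>m n)
      ((-V) * 1\<^sub>m n + 1\<^sub>m n * 0\<^sub>m n n) ((-V) * (-U) + 1\<^sub>m n * 1\<^sub>m n)"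
    by (rule mult_four_block_mat, insert U V, auto)
  also have "\<dots> = four_block_mat (1\<^sub>m n) (0\<^sub>m n n) (-V) (1\<^sub>m n + V * U)"
    using U V by (intro cong_four_block_mat) (auto intro!: eq_matI)
  finally have FR: "?F * ?R = four_block_mat (1\<^sub>m n) (0\<^sub>m n n) (-V) (1\<^sub>m n + V * U)" .
  have "det (?F * ?R) = det ?F * det ?R" by (rule det_mult[OF F R])
  moreover have "det ?R = 1"
    by (subst det_four_block_mat_lower_left_zero[of _ n _ n], insert U, auto)
  moreover have "det (?F * ?R) = det (1\<^sub>m n + V * U)"
    unfolding FR
    by (subst det_four_block_mat_upper_right_zero[of _ n _ n], insert U V, auto)
  ultimately show ?thesis using 1 by simp
qed


lemma detJ:
  fixes t :: real
  assumes n: "n > 0"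
  shows "det (1\<^sub>m n + t \<cdot>\<^sub>m mat n n (\<lambda>_. 1)) = 1 + t * real n"
proof -
  define U :: "real mat" where "U = mat n n (\<lambda>(i,j). if j = 0 then t else 0)"
  define V :: "real mat" where "V = mat n n (\<lambda>(i,j). if i = 0 then 1 else 0)"
  have UV: "U * V = t \<cdot>\<^sub>m mat n n (\<lambda>_. 1)"
  proof (rule eq_matI)
    fix i j assume "i < dim_row (t \<cdot>\<^sub>m mat n n (\<lambda>_. 1))" "j < dim_col (t \<cdot>\<^sub>m mat n n (\<lambda>_. 1))"
    then have ij: "i < n" "j < n" by auto
    have "(U * V) $$ (i,j) = (\<Sum>k\<in>{0..<n}. (if k = 0 then t else 0) * (if k = 0 then 1 else 0))"
      using ij unfolding U_def V_def by (simp add: scalar_prod_def)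
    also have "\<dots> = (\<Sum>k\<in>{0..<n}. if k = 0 then t else 0)" by (rule sum.cong) auto
    also have "\<dots> = t" using n by (simp add: sum.delta)
    finally show "(U * V) $$ (i,j) = (t \<cdot>\<^sub>m mat n n (\<lambda>_. 1)) $$ (i,j)" using ij by simp
  qed (auto simp: U_def V_def)
  have VU: "1\<^sub>m n + V * U = mat n n (\<lambda>(i,j). if i = j then (if i = 0 then 1 + t * real n else 1) else 0)"
  proof (rule eq_matI)
    fix i j assume "i < dim_row (mat n n (\<lambda>(i,j). if i = j then (if i = 0 then 1 + t * real n else 1) else (0::real)))"
      "j < dim_col (mat n n (\<lambda>(i,j). if i = j then (if i = 0 then 1 + t * real n else 1) else (0::real)))"
    then have ij: "i < n" "j < n" by auto
    have "(V * U) $$ (i,j) = (\<Sum>k\<in>{0..<n}. (if i = 0 then 1 else 0) * (if j = 0 then t else 0))"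
      using ij unfolding U_def V_def by (simp add: scalar_prod_def)
    also have "\<dots> = (if i = 0 \<and> j = 0 then t * real n else 0)" by simp
    finally show "(1\<^sub>m n + V * U) $$ (i,j) = mat n n (\<lambda>(i,j). if i = j then (if i = 0 then 1 + t * real n else 1) else 0) $$ (i,j)"
      using ij U_def V_def by auto
  qed (auto simp: U_def V_def)
  have "det (1\<^sub>m n + U * V) = det (1\<^sub>m n + V * U)"
    by (rule sylvester, auto simp: U_def V_def)
  also have "\<dots> = prod_list (diag_mat (1\<^sub>m n + V * U))"
    by (rule det_upper_triangular, unfold VU, auto simp: upper_triangular_def)
  also have "\<dots> = (\<Prod>i\<in>{0..<n}. if i = 0 then 1 + t * real n else 1)"
    unfolding diag_mat_def prod.distinct_set_conv_list[OF distinct_upt, symmetric] set_upt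
    by (intro prod.cong) (auto simp: VU)
  also have "\<dots> = 1 + t * real n" using n by (simp add: prod.delta)
  finally show ?thesis unfolding UV .
qed



lemma sum_indicator_card:
  "(\<Sum>w\<in>{0..<(m::nat)}. (if P w then 1 else 0 :: real)) = real (card {w. w < m \<and> P w})"
proof -
  have "(\<Sum>w\<in>{0..<m}. (if P w then 1 else 0 :: real)) = (\<Sum>w\<in>{0..<m} \<inter> {w. P w}. 1)"
    by (subst sum.inter_restrict) auto
  moreover have "{0..<m} \<inter> {w. P w} = {w. w < m \<and> P w}" by auto
  ultimately show ?thesis by simp
qed

context
  fixes m d c1 c2 :: nat and N :: "nat \<Rightarrow> nat \<Rightarrow> bool"
  assumes X: "partial_design_graph m d c1 c2 N"
begin

definition "Nm = mat m m (\<lambda>(i,j). if N i j then 1 else (0::real))"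
definition "aa i j = (if Y_adj m c1 N i j then 1 else (0::real))"

lemma c12: "c1 \<noteq> c2" using X unfolding partial_design_graph_def by auto

lemma m2: "2 \<le> m"
proof -
  have "c1 \<in> {common_black m N u v | u v. u < m \<and> v < m \<and> u \<noteq> v}
       \<union> {common_white m N u v | u v. u < m \<and> v < m \<and> u \<noteq> v}"
    using X unfolding partial_design_graph_def by auto
  then obtain u v where "u < m" "v < m" "u \<noteq> v" by auto
  then show ?thesis by linarith
qed

lemma cb: "u < m \<Longrightarrow> v < m \<Longrightarrow> u \<noteq> v \<Longrightarrow> common_black m N u v = c1 \<or> common_black m N u v = c2"
proof -
  assume "u < m" "v < m" "u \<noteq> v"
  then have "common_black m N u v \<in> {common_black m N u v | u v. u < m \<and> v < m \<and> u \<noteq> v}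
       \<union> {common_white m N u v | u v. u < m \<and> v < m \<and> u \<noteq> v}" by blast
  then show ?thesis using X unfolding partial_design_graph_def by auto
qed

lemma bdeg: "u < m \<Longrightarrow> black_deg m N u = d" using X unfolding partial_design_graph_def by auto
lemma wdeg: "w < m \<Longrightarrow> white_deg m N w = d" using X unfolding partial_design_graph_def by auto

lemma Nm_carrier[simp]: "Nm \<in> carrier_mat m m" by (simp add: Nm_def)

lemma MM_entry: assumes "i < m" "j < m"
  shows "(Nm * transpose_mat Nm) $$ (i,j) = (\<Sum>w\<in>{0..<m}. (if N i w \<and> N j w then 1 else 0 :: real))"
  using assms unfolding Nm_def by (auto simp: scalar_prod_def intro!: sum.cong)

lemma MM_eq: "Nm * transpose_mat Nm = mat m m (\<lambda>(i,j). (if i = j then real d - real c2 else 0) + (real c1 - real c2) * aa i j + real c2)"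
proof (rule eq_matI)
  fix i j assume "i < dim_row (mat m m (\<lambda>(i,j). (if i = j then real d - real c2 else 0) + (real c1 - real c2) * aa i j + real c2))"
    "j < dim_col (mat m m (\<lambda>(i,j). (if i = j then real d - real c2 else 0) + (real c1 - real c2) * aa i j + real c2))"
  then have ij: "i < m" "j < m" by auto
  have e: "(Nm * transpose_mat Nm) $$ (i,j) = real (common_black m N i j)"
    unfolding MM_entry[OF ij] sum_indicator_card common_black_def by simp
  show "(Nm * transpose_mat Nm) $$ (i,j) = mat m m (\<lambda>(i,j). (if i = j then real d - real c2 else 0) + (real c1 - real c2) * aa i j + real c2) $$ (i,j)"
  proof (cases "i = j")
    case True
    have "common_black m N i j = black_deg m N i" unfolding common_black_def black_deg_def True by simp
    then show ?thesis using True ij e bdeg[of i] by (simp add: aa_def Y_adj_def)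
  next
    case False
    then show ?thesis using ij e cb[of i j] by (auto simp: aa_def Y_adj_def)
  qed
qed (auto simp: Nm_def)

lemma MM_rowsum: assumes i: "i < m"
  shows "(\<Sum>j\<in>{0..<m}. (Nm * transpose_mat Nm) $$ (i,j)) = real d * real d"
proof -
  have "(\<Sum>j\<in>{0..<m}. (Nm * transpose_mat Nm) $$ (i,j))
      = (\<Sum>j\<in>{0..<m}. \<Sum>w\<in>{0..<m}. (if N i w then 1 else 0) * (if N j w then 1 else 0 :: real))"
    using i by (intro sum.cong) (auto simp: MM_entry intro!: sum.cong)
  also have "\<dots> = (\<Sum>w\<in>{0..<m}. (if N i w then 1 else 0) * (\<Sum>j\<in>{0..<m}. (if N j w then 1 else 0 :: real)))"
    by (subst sum.swap) (simp add: sum_distrib_left)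
  also have "\<dots> = (\<Sum>w\<in>{0..<m}. (if N i w then 1 else 0) * real d)"
  proof (intro sum.cong refl)
    fix w assume "w \<in> {0..<m}"
    then show "(if N i w then 1 else 0) * (\<Sum>j\<in>{0..<m}. (if N j w then 1 else 0 :: real)) = (if N i w then 1 else 0) * real d"
      unfolding sum_indicator_card using wdeg[of w] by (simp add: white_deg_def)
  qed
  also have "\<dots> = real d * real d"
    unfolding sum_distrib_right[symmetric] sum_indicator_card using bdeg[OF i] by (simp add: black_deg_def)
  finally show ?thesis .
qed

lemma aa_rowsum: "i < m \<Longrightarrow> (\<Sum>j\<in>{0..<m}. aa i j) = real (Y_deg m c1 N i)"
proof -
  have "{w. w < m \<and> Y_adj m c1 N i w} = {v. Y_adj m c1 N i v}" by (auto simp: Y_adj_def)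
  then show ?thesis unfolding aa_def sum_indicator_card Y_deg_def by simp
qed

definition "dd = (real d * (real d - 1) - (real m - 1) * real c2) / (real c1 - real c2)"

lemma deg_eq: assumes i: "i < m" shows "real (Y_deg m c1 N i) = dd"
proof -
  have "real d * real d = (\<Sum>j\<in>{0..<m}. (if i = j then real d - real c2 else 0) + (real c1 - real c2) * aa i j + real c2)"
    unfolding MM_rowsum[OF i, symmetric] MM_eq using i by (intro sum.cong) auto
  also have "\<dots> = (real d - real c2) + (real c1 - real c2) * real (Y_deg m c1 N i) + real c2 * real m"
    using i by (simp add: sum.distrib sum_distrib_left[symmetric] aa_rowsum)
  finally have "real d * real d = (real d - real c2) + (real c1 - real c2) * real (Y_deg m c1 N i) + real c2 * real m" .
  moreover have "real c1 - real c2 \<noteq> 0" using c12 by simp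
  ultimately show ?thesis unfolding dd_def by (simp add: field_simps)
qed

lemma dd_rel: "real d * real d = (real d - real c2) + (real c1 - real c2) * dd + real c2 * real m"
  using c12 unfolding dd_def by (simp add: field_simps)


lemma aa_rowsum_dd: "i < m \<Longrightarrow> (\<Sum>j\<in>{0..<m}. aa i j) = dd"
  using aa_rowsum deg_eq by simp

lemma Ymat_eq: "Y_mat m c1 N = mat m m (\<lambda>(i,j). aa i j)"
  unfolding Y_mat_def aa_def by simp

lemma prod_split0: "(0::nat) < n \<Longrightarrow> (\<Prod>k<n. f k) = f 0 * (\<Prod>k\<in>{1..<n}. f k)"
proof -
  assume "0 < n"
  then have "{..<n} = insert 0 {1..<n}" by auto
  then show ?thesis by simp
qed

lemma det_main:
  fixes \<alpha> :: "real list" and y :: real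
  assumes len: "length \<alpha> = m" and a0: "\<alpha> ! 0 = dd"
    and cp: "char_poly (Y_mat m c1 N) = (\<Prod>k<m. [:- (\<alpha> ! k), 1:])"
    and beta: "y - ((real d - real c2) + (real c1 - real c2) * dd) \<noteq> 0"
  shows "det (y \<cdot>\<^sub>m 1\<^sub>m m - Nm * transpose_mat Nm)
     = (y - real d * real d) * (\<Prod>k\<in>{1..<m}. y - ((real d - real c2) + (real c1 - real c2) * \<alpha> ! k))"
proof -
  define \<beta> where "\<beta> = y - ((real d - real c2) + (real c1 - real c2) * dd)"
  define B where "B = mat m m (\<lambda>(i,j). (if i = j then y - (real d - real c2) else 0) - (real c1 - real c2) * aa i j)"
  define t where "t = - real c2 / \<beta>"
  define J where "J = mat m m (\<lambda>_. 1::real)"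
  have cne: "real c1 - real c2 \<noteq> 0" using c12 by simp
  have bne: "\<beta> \<noteq> 0" using beta \<beta>_def by simp
  have Bc: "B \<in> carrier_mat m m" by (simp add: B_def)
  have Jc: "1\<^sub>m m + t \<cdot>\<^sub>m J \<in> carrier_mat m m" by (simp add: J_def)
  have Brow: "(\<Sum>k\<in>{0..<m}. B $$ (i,k)) = \<beta>" if i: "i < m" for i
  proof -
    have "(\<Sum>k\<in>{0..<m}. B $$ (i,k)) = (\<Sum>k\<in>{0..<m}. (if i = k then y - (real d - real c2) else 0) - (real c1 - real c2) * aa i k)"
      using i by (intro sum.cong) (auto simp: B_def)
    also have "\<dots> = (y - (real d - real c2)) - (real c1 - real c2) * dd"
      using i by (simp add: sum_subtractf sum_distrib_left[symmetric] aa_rowsum_dd)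
    finally show ?thesis unfolding \<beta>_def by simp
  qed
  have h1: "y \<cdot>\<^sub>m 1\<^sub>m m - Nm * transpose_mat Nm = B * (1\<^sub>m m + t \<cdot>\<^sub>m J)"
  proof (rule eq_matI)
    fix i j assume "i < dim_row (B * (1\<^sub>m m + t \<cdot>\<^sub>m J))" "j < dim_col (B * (1\<^sub>m m + t \<cdot>\<^sub>m J))"
    then have ij: "i < m" "j < m" by (auto simp: B_def J_def)
    have "(B * (1\<^sub>m m + t \<cdot>\<^sub>m J)) $$ (i,j) = (\<Sum>k\<in>{0..<m}. B $$ (i,k) * ((if k = j then 1 else 0) + t))"
      using ij by (auto simp: B_def J_def scalar_prod_def intro!: sum.cong)
    also have "\<dots> = (\<Sum>k\<in>{0..<m}. (if k = j then B $$ (i,k) else 0)) + t * (\<Sum>k\<in>{0..<m}. B $$ (i,k))"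
    proof -
      have "(\<Sum>k\<in>{0..<m}. B $$ (i,k) * (if k = j then 1 else 0)) = (\<Sum>k\<in>{0..<m}. (if k = j then B $$ (i,k) else 0))"
        by (intro sum.cong) auto
      then show ?thesis by (simp add: distrib_left sum.distrib sum_distrib_left mult.commute)
    qed
    also have "\<dots> = B $$ (i,j) + t * \<beta>" using ij Brow by simp
    also have "\<dots> = B $$ (i,j) - real c2" using bne unfolding t_def by simp
    finally show "(y \<cdot>\<^sub>m 1\<^sub>m m - Nm * transpose_mat Nm) $$ (i,j) = (B * (1\<^sub>m m + t \<cdot>\<^sub>m J)) $$ (i,j)"
      using ij by (simp add: MM_eq B_def)
  qed (auto simp: B_def J_def Nm_def)
  define z where "z = (y - (real d - real c2)) / (real c1 - real c2)"
  have h2: "B = (real c1 - real c2) \<cdot>\<^sub>m (z \<cdot>\<^sub>m 1\<^sub>m m - Y_mat m c1 N)"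
    unfolding Ymat_eq B_def z_def using cne by (intro eq_matI) (auto simp: field_simps)
  have "det B = (real c1 - real c2) ^ m * det (z \<cdot>\<^sub>m 1\<^sub>m m - Y_mat m c1 N)"
    unfolding h2 by (simp add: Y_mat_def)
  also have "det (z \<cdot>\<^sub>m 1\<^sub>m m - Y_mat m c1 N) = poly (char_poly (Y_mat m c1 N)) z"
    by (rule char_poly_eval[symmetric]) (simp add: Y_mat_def)
  also have "\<dots> = (\<Prod>k<m. z - \<alpha> ! k)" unfolding cp by (simp add: poly_prod)
  finally have "det B = (\<Prod>k<m. real c1 - real c2) * (\<Prod>k<m. z - \<alpha> ! k)" by simp
  also have "\<dots> = (\<Prod>k<m. y - ((real d - real c2) + (real c1 - real c2) * \<alpha> ! k))"
    unfolding prod.distrib[symmetric] using cne by (intro prod.cong) (auto simp: z_def field_simps)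
  also have "\<dots> = \<beta> * (\<Prod>k\<in>{1..<m}. y - ((real d - real c2) + (real c1 - real c2) * \<alpha> ! k))"
    using m2 a0 by (subst prod_split0) (auto simp: \<beta>_def)
  finally have dB: "det B = \<beta> * (\<Prod>k\<in>{1..<m}. y - ((real d - real c2) + (real c1 - real c2) * \<alpha> ! k))" .
  have dJ: "det (1\<^sub>m m + t \<cdot>\<^sub>m J) = 1 + t * real m" unfolding J_def using m2 by (intro detJ) simp
  have "det (y \<cdot>\<^sub>m 1\<^sub>m m - Nm * transpose_mat Nm) = det B * det (1\<^sub>m m + t \<cdot>\<^sub>m J)"
    unfolding h1 by (rule det_mult[OF Bc Jc])
  also have "\<dots> = (\<beta> * (1 + t * real m)) * (\<Prod>k\<in>{1..<m}. y - ((real d - real c2) + (real c1 - real c2) * \<alpha> ! k))"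
    unfolding dB dJ by simp
  also have "\<beta> * (1 + t * real m) = y - real d * real d"
  proof -
    have "\<beta> * (1 + t * real m) = \<beta> - real c2 * real m"
      using bne unfolding t_def by (simp add: field_simps)
    then show ?thesis using dd_rel unfolding \<beta>_def by (simp add: algebra_simps)
  qed
  finally show ?thesis .
qed


lemma poly_lin: "poly [:-a, 1:] y = y - (a::real)" by simp

lemma cpMM:
  fixes \<alpha> :: "real list"
  assumes len: "length \<alpha> = m" and a0: "\<alpha> ! 0 = dd"
    and cp: "char_poly (Y_mat m c1 N) = (\<Prod>k<m. [:- (\<alpha> ! k), 1:])"
  shows "char_poly (Nm * transpose_mat Nm) = [:- (real d * real d), 1:] *
     (\<Prod>k\<in>{1..<m}. [:- ((real d - real c2) + (real c1 - real c2) * \<alpha> ! k), 1:])"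
    (is "?L = ?R")
proof (rule ccontr)
  assume ne: "?L \<noteq> ?R"
  define y0 where "y0 = (real d - real c2) + (real c1 - real c2) * dd"
  have "poly (?L - ?R) y = 0" if "y \<noteq> y0" for y
  proof -
    have "poly ?L y = det (y \<cdot>\<^sub>m 1\<^sub>m m - Nm * transpose_mat Nm)"
      by (rule char_poly_eval, rule mult_carrier_mat[of _ m m _ m]) (auto simp: Nm_def)
    also have "\<dots> = poly ?R y"
      using det_main[OF len a0 cp, of y] that unfolding y0_def by (simp only: poly_mult poly_prod poly_lin)
    finally show ?thesis by simp
  qed
  then have "UNIV \<subseteq> insert y0 {y. poly (?L - ?R) y = 0}" by auto
  moreover have "finite (insert y0 {y. poly (?L - ?R) y = 0})"
    using poly_roots_finite[of "?L - ?R"] ne by simp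
  ultimately have "finite (UNIV :: real set)" by (rule finite_subset)
  then show False using infinite_UNIV_char_0 by blast
qed

lemma psd: assumes "eigenvalue (Nm * transpose_mat Nm) \<mu>" shows "\<mu> \<ge> 0"
proof -
  from assms obtain v where v: "v \<in> carrier_vec m" "v \<noteq> 0\<^sub>v m"
    and ev: "(Nm * transpose_mat Nm) *\<^sub>v v = \<mu> \<cdot>\<^sub>v v"
    unfolding eigenvalue_def eigenvector_def by (auto simp: Nm_def)
  define w where "w = transpose_mat Nm *\<^sub>v v"
  have wc: "w \<in> carrier_vec m" unfolding w_def carrier_vec_def Nm_def by simp
  have "v \<bullet> ((Nm * transpose_mat Nm) *\<^sub>v v) = v \<bullet> (Nm *\<^sub>v w)"
    unfolding w_def using v by (subst assoc_mult_mat_vec[of _ m m _ m]) auto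
  also have "\<dots> = w \<bullet> w"
    unfolding w_def by (rule transpose_vec_mult_scalar[symmetric, of _ m m], insert v wc, auto simp: w_def)
  finally have eq: "\<mu> * (v \<bullet> v) = w \<bullet> w" using ev v by simp
  have "w \<bullet> w \<ge> 0" unfolding scalar_prod_def by (intro sum_nonneg) simp
  moreover have "v \<bullet> v > 0"
  proof -
    obtain i where i: "i < m" "v $ i \<noteq> 0"
    proof (rule ccontr)
      assume "\<not> thesis"
      with that have "\<forall>i<m. v $ i = 0" by blast
      then have "v = 0\<^sub>v m" using v by (intro eq_vecI) auto
      with v show False by simp
    qed
    have "0 < (\<Sum>j\<in>{0..<m}. v $ j * v $ j)"
      by (rule sum_pos2[of _ i]) (use i in \<open>auto simp: zero_less_mult_iff linorder_neq_iff\<close>)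
    then show ?thesis using v unfolding scalar_prod_def by simp
  qed
  ultimately show ?thesis using eq by (metis zero_le_mult_iff not_le)
qed

lemma Xblock: "x \<cdot>\<^sub>m 1\<^sub>m (2*m) - X_mat m N = four_block_mat (x \<cdot>\<^sub>m 1\<^sub>m m) (- Nm) (- transpose_mat Nm) (x \<cdot>\<^sub>m 1\<^sub>m m)"
  by (rule eq_matI) (auto simp: X_mat_def X_adj_def Nm_def)

lemma detX: "det (x \<cdot>\<^sub>m 1\<^sub>m (2*m) - X_mat m N) = det ((x * x) \<cdot>\<^sub>m 1\<^sub>m m - Nm * transpose_mat Nm)"
proof -
  have c: "x \<cdot>\<^sub>m 1\<^sub>m m \<in> carrier_mat m m" "- Nm \<in> carrier_mat m m" "- transpose_mat Nm \<in> carrier_mat m m"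
    by (auto simp: Nm_def)
  have "det (x \<cdot>\<^sub>m 1\<^sub>m (2*m) - X_mat m N) = det ((x \<cdot>\<^sub>m 1\<^sub>m m) * (x \<cdot>\<^sub>m 1\<^sub>m m) - (- Nm) * (- transpose_mat Nm))"
    unfolding Xblock
    by (rule det_four_block_mat[OF c(1) c(2) c(3) c(1)])
       (auto simp: mult_smult_distrib[of _ m m _ m] mult_smult_assoc_mat[of _ m m _ m] Nm_def)
  also have "(x \<cdot>\<^sub>m 1\<^sub>m m) * (x \<cdot>\<^sub>m 1\<^sub>m m) - (- Nm) * (- transpose_mat Nm) = (x * x) \<cdot>\<^sub>m 1\<^sub>m m - Nm * transpose_mat Nm"
    by (auto simp: mult_smult_distrib[of _ m m _ m] mult_smult_assoc_mat[of _ m m _ m] Nm_def)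
  finally show ?thesis .
qed

end


lemma poly_lin2: "poly [:a, 1:] y = y + (a::real)" by simp
lemma poly_lin0: "poly [:-a, 1:] y = y - (a::real)" by simp

theorem mainTheorem17:
  fixes m d c1 c2 :: nat and N :: "nat \<Rightarrow> nat \<Rightarrow> bool"
  assumes X: "partial_design_graph m d c1 c2 N"
  defines "d' \<equiv> (real d * (real d - 1) - (real m - 1) * real c2) / (real c1 - real c2)"
  shows "(\<forall>u<m. real (Y_deg m c1 N u) = d') \<and>
    (\<forall>\<alpha> :: real list. length \<alpha> = m \<longrightarrow> \<alpha> ! 0 = d' \<longrightarrow>
       char_poly (Y_mat m c1 N) = (\<Prod>k<m. [:- (\<alpha> ! k), 1:]) \<longrightarrow>
       char_poly (X_mat m N) =
         [:- real d, 1:] * [:real d, 1:] *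
         (\<Prod>k\<in>{1..<m}.
            [:- sqrt ((real d - real c2) + (real c1 - real c2) * \<alpha> ! k), 1:] *
            [:sqrt ((real d - real c2) + (real c1 - real c2) * \<alpha> ! k), 1:]))"
proof -
  have dd: "dd m d c1 c2 = d'" unfolding d'_def dd_def[OF X] by simp
  show ?thesis
  proof (intro conjI allI impI)
    fix u assume "u < m" then show "real (Y_deg m c1 N u) = d'" using deg_eq[OF X] dd by simp
  next
    fix \<alpha> :: "real list"
    assume len: "length \<alpha> = m" and a0: "\<alpha> ! 0 = d'"
      and cp: "char_poly (Y_mat m c1 N) = (\<Prod>k<m. [:- (\<alpha> ! k), 1:])"
    define \<mu> where "\<mu> k = (real d - real c2) + (real c1 - real c2) * \<alpha> ! k" for k
    let ?MM = "Nm m N * transpose_mat (Nm m N)"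
    have MMc: "?MM \<in> carrier_mat m m"
      by (rule mult_carrier_mat[of _ m m _ m]) (auto simp: Nm_def[OF X])
    have G: "char_poly ?MM = [:- (real d * real d), 1:] * (\<Prod>k\<in>{1..<m}. [:- \<mu> k, 1:])"
      using cpMM[OF X len _ cp] a0 dd unfolding \<mu>_def by simp
    have pos: "\<mu> k \<ge> 0" if k: "k \<in> {1..<m}" for k
    proof -
      have "poly (char_poly ?MM) (\<mu> k) = 0"
        unfolding G poly_mult poly_prod using k by (auto simp: prod_zero_iff intro!: bexI[of _ k])
      then have "eigenvalue ?MM (\<mu> k)" using eigenvalue_root_char_poly[OF MMc] by simp
      then show ?thesis by (rule psd[OF X])
    qed
    show "char_poly (X_mat m N) =
         [:- real d, 1:] * [:real d, 1:] *
         (\<Prod>k\<in>{1..<m}.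
            [:- sqrt ((real d - real c2) + (real c1 - real c2) * \<alpha> ! k), 1:] *
            [:sqrt ((real d - real c2) + (real c1 - real c2) * \<alpha> ! k), 1:])"
      unfolding \<mu>_def[symmetric]
    proof (rule poly_eq_poly_eq_iff[THEN iffD1], rule ext)
      fix x :: real
      have "poly (char_poly (X_mat m N)) x = det (x \<cdot>\<^sub>m 1\<^sub>m (2*m) - X_mat m N)"
        by (rule char_poly_eval) (simp add: X_mat_def)
      also have "\<dots> = det ((x * x) \<cdot>\<^sub>m 1\<^sub>m m - ?MM)" by (rule detX[OF X])
      also have "\<dots> = poly (char_poly ?MM) (x * x)" by (rule char_poly_eval[symmetric, OF MMc])
      also have "\<dots> = (x * x - real d * real d) * (\<Prod>k\<in>{1..<m}. x * x - \<mu> k)"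
        unfolding G by (simp only: poly_mult poly_prod poly_lin0)
      also have "\<dots> = ((x - real d) * (x + real d)) * (\<Prod>k\<in>{1..<m}. (x - sqrt (\<mu> k)) * (x + sqrt (\<mu> k)))"
      proof -
        have "(\<Prod>k\<in>{1..<m}. x * x - \<mu> k) = (\<Prod>k\<in>{1..<m}. (x - sqrt (\<mu> k)) * (x + sqrt (\<mu> k)))"
        proof (rule prod.cong[OF refl])
          fix k assume "k \<in> {1..<m}"
          then have "sqrt (\<mu> k) * sqrt (\<mu> k) = \<mu> k" using pos by simp
          then show "x * x - \<mu> k = (x - sqrt (\<mu> k)) * (x + sqrt (\<mu> k))" by (simp add: algebra_simps)
        qed
        then show ?thesis by (simp add: algebra_simps)
      qed
      also have "\<dots> = poly ([:- real d, 1:] * [:real d, 1:] *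
         (\<Prod>k\<in>{1..<m}. [:- sqrt (\<mu> k), 1:] * [:sqrt (\<mu> k), 1:])) x"
        by (simp only: poly_mult poly_prod poly_lin0 poly_lin2) simp
      finally show "poly (char_poly (X_mat m N)) x = poly ([:- real d, 1:] * [:real d, 1:] *
         (\<Prod>k\<in>{1..<m}. [:- sqrt (\<mu> k), 1:] * [:sqrt (\<mu> k), 1:])) x" .
    qed
  qed
qed

end
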